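(* Let $k\ge 1$ and let $m,N$ be integers with $N\ge 3$, $m\ge 1$, $\gcd(m,N)=1$, such that $e^{2\pi i m/N}$ is a root of $Q_{k-1}(q)$. Then $\gcd(N,4k+1)\in\{1,3\}$. In particular, if $k\not\equiv 2\pmod 3$, then $\gcd(N,4k+1)=1$.
   Context: $Q_{k-1}(q)=q^{4k+4}-q^{4k+3}-q^{4k+2}-q^{4k+1}+q^3+q^2+q-1=(q^4-1)P_{k-1}(q)$, where $P_{k-1}(q)=1+\sum_{l=1}^{k} q^{4l-4}(q^4-q^3-q^2-q)$. *)

theory Defs
  imports "HOL-Analysis.Analysis"
begin

definition Qpoly :: "nat \<Rightarrow> complex \<Rightarrow> complex" where
  "Qpoly k q = q^(4*k+4) - q^(4*k+3) - q^(4*k+2) - q^(4*k+1) + q^3 + q^2 + q - 1"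

end

theory Submission
  imports Defs "HOL-Computational_Algebra.Polynomial" "HOL-Computational_Algebra.Primes"
begin


lemma frob_ring:
  fixes a b :: "'a::comm_ring_1"
  assumes p: "prime p"
  shows "\<exists>c. (a+b)^p = a^p + b^p + of_nat p * c"
proof -
  have p0: "p > 1" using p prime_gt_1_nat by blast
  have "(a+b)^p = (\<Sum>k\<le>p. of_nat (p choose k) * a^k * b^(p-k))"
    by (rule binomial_ring)
  also have "{..p} = insert p (insert 0 {1..<p})" using p0 by auto
  also have "(\<Sum>k\<in>insert p (insert 0 {1..<p}). of_nat (p choose k) * a^k * b^(p-k))
      = a^p + b^p + (\<Sum>k\<in>{1..<p}. of_nat (p choose k) * a^k * b^(p-k))"
    using p0 by (simp add: sum.insert)
  also have "(\<Sum>k\<in>{1..<p}. of_nat (p choose k) * a^k * b^(p-k))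
      = of_nat p * (\<Sum>k\<in>{1..<p}. of_nat ((p choose k) div p) * a^k * b^(p-k))"
  proof -
    have "\<And>k. k \<in> {1..<p} \<Longrightarrow> (of_nat (p choose k) :: 'a) = of_nat p * of_nat ((p choose k) div p)"
    proof -
      fix k assume k: "k \<in> {1..<p}"
      have "p dvd (p choose k)" using k p by (intro dvd_choose_prime) auto
      then show "(of_nat (p choose k) :: 'a) = of_nat p * of_nat ((p choose k) div p)"
        by (metis dvd_mult_div_cancel of_nat_mult)
    qed
    then show ?thesis by (simp add: sum_distrib_left mult.assoc)
  qed
  finally show ?thesis by blast
qed

lemma fermat_int:
  fixes c :: int
  assumes p: "prime p"
  shows "\<exists>t. c^p = c + int p * t"
proof -
  have nat_case: "\<exists>t. (int n)^p = int n + int p * t" for n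
  proof (induction n)
    case 0
    then show ?case using p by (intro exI[of _ 0]) (simp add: prime_gt_0_nat)
  next
    case (Suc n)
    then obtain t where t: "(int n)^p = int n + int p * t" by blast
    obtain c where c: "(int n + 1)^p = (int n)^p + 1^p + of_nat p * c"
      using frob_ring[OF p] by blast
    show ?case using t c by (intro exI[of _ "t + c"]) (simp add: algebra_simps)
  qed
  show ?thesis
  proof (cases "c \<ge> 0")
    case True
    then show ?thesis using nat_case[of "nat c"] by simp
  next
    case False
    obtain t where t: "(int (nat (-c)))^p = int (nat (-c)) + int p * t" using nat_case by blast
    hence t': "(-c)^p = -c + int p * t" using False by simp
    obtain e where e: "(-c + c)^p = (-c)^p + c^p + of_nat p * e"
      using frob_ring[OF p] by blast
    have z0: "(0::int)^p = 0" using p by (simp add: prime_gt_0_nat)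
    show ?thesis using t' e z0 by (intro exI[of _ "- t - e"]) (simp add: algebra_simps)
  qed
qed

lemma const_pow_poly: "[:c:]^n = [:(c::'a::comm_ring_1)^n:]"
  by (induction n) (auto simp: poly_eq_iff coeff_pCons split: nat.split)

lemma frob_poly:
  fixes h :: "int poly"
  assumes p: "prime p"
  shows "\<exists>k. h^p = pcompose h (monom 1 p) + smult (int p) k"
proof (induction h)
  case 0
  then show ?case using p by (intro exI[of _ 0]) (simp add: prime_gt_0_nat)
next
  case (pCons c h1)
  then obtain k1 where k1: "h1^p = pcompose h1 (monom 1 p) + smult (int p) k1" by blast
  obtain t where t: "c^p = c + int p * t" using fermat_int[OF p] by blast
  have eq: "pCons c h1 = [:c:] + [:0,1:] * h1" by (simp add: poly_eq_iff coeff_pCons split: nat.split)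
  obtain C where C: "([:c:] + [:0,1:] * h1)^p = [:c:]^p + ([:0,1:] * h1)^p + of_nat p * C"
    using frob_ring[OF p] by blast
  have x: "[:0,1:]^p = (monom 1 p :: int poly)" by (simp add: monom_altdef)
  have "(pCons c h1)^p = [:c:] + smult (int p) [:t:] + monom 1 p * (pcompose h1 (monom 1 p) + smult (int p) k1) + smult (int p) C"
    unfolding eq C power_mult_distrib x k1[symmetric]
    by (simp add: t of_nat_poly const_pow_poly smult_add_right)
  also have "\<dots> = pcompose (pCons c h1) (monom 1 p) + smult (int p) ([:t:] + monom 1 p * k1 + C)"
    by (simp add: pcompose_pCons algebra_simps smult_add_right)
  finally show ?case by blast
qed

abbreviation ip :: "int poly \<Rightarrow> complex \<Rightarrow> complex" where
  "ip p z \<equiv> poly (map_poly of_int p) z"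

lemma mpi_smult [simp]: "(map_poly of_int (smult c p) :: complex poly) = smult (of_int c) (map_poly of_int p)"
  by (simp add: smult_conv_map_poly map_poly_map_poly o_def)
lemma mpi_add [simp]: "(map_poly of_int (p + q) :: complex poly) = map_poly of_int p + map_poly of_int q"
  by (intro poly_eqI) (simp_all add: coeff_map_poly)
lemma mpi_diff [simp]: "(map_poly of_int (p - q) :: complex poly) = map_poly of_int p - map_poly of_int q"
  by (intro poly_eqI) (simp_all add: coeff_map_poly)
lemma mpi_mult [simp]: "(map_poly of_int (p * q) :: complex poly) = map_poly of_int p * map_poly of_int q"
  by (intro poly_eqI) (simp_all add: coeff_map_poly coeff_mult)
lemma mpi_power [simp]: "(map_poly of_int (p ^ n) :: complex poly) = map_poly of_int p ^ n"
  by (induction n) simp_all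
lemma mpi_monom [simp]: "(map_poly of_int (monom c n) :: complex poly) = monom (of_int c) n"
  by (simp add: map_poly_monom)
lemma mpi_pcompose [simp]: "(map_poly of_int (pcompose p q) :: complex poly) = pcompose (map_poly of_int p) (map_poly of_int q)"
  by (induction p) (simp_all add: pcompose_pCons map_poly_pCons)

lemma ip_smult: "ip (smult a p) z = of_int a * ip p z"
  by simp
lemma ip_mult: "ip (p * q) z = ip p z * ip q z"
  by simp
lemma ip_add: "ip (p + q) z = ip p z + ip q z"
  by simp

lemma prim_dvd:
  fixes g F q :: "int poly"
  assumes c: "content g = 1" and a: "a \<noteq> 0" and eq: "smult a F = g * q"
  shows "g dvd F"
proof -
  have "content (smult a F) = content (g*q)" using eq by simp
  hence cq: "content q = \<bar>a\<bar> * content F" using c by (simp add: content_mult)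
  have "smult a F = smult (\<bar>a\<bar> * content F) (g * primitive_part q)"
    using eq cq by (metis content_times_primitive_part mult_smult_right)
  hence "smult a F = smult a (smult (sgn a * content F) (g * primitive_part q))"
    using a by (simp add: abs_sgn[of a] mult.assoc sgn_mult_abs)
  hence "F = smult (sgn a * content F) (g * primitive_part q)"
    using a by (auto simp: poly_eq_iff)
  thus ?thesis by (metis dvd_triv_left mult_smult_right)
qed

lemma minpoly_exists:
  fixes z :: complex
  assumes "\<exists>p. p \<noteq> 0 \<and> ip p z = 0"
  shows "\<exists>g. g \<noteq> 0 \<and> content g = 1 \<and> ip g z = 0 \<and> (\<forall>F. ip F z = 0 \<longrightarrow> g dvd F)"
proof -
  define P where "P = (\<lambda>d. \<exists>p. p \<noteq> 0 \<and> ip p z = 0 \<and> degree p = d)"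
  have ex: "\<exists>d. P d" using assms unfolding P_def by blast
  define d where "d = (LEAST d. P d)"
  have Pd: "P d" unfolding d_def using ex by (metis LeastI)
  have mind: "\<And>p. p \<noteq> 0 \<Longrightarrow> ip p z = 0 \<Longrightarrow> d \<le> degree p"
    unfolding d_def P_def by (rule Least_le) blast
  obtain g0 where g0: "g0 \<noteq> 0" "ip g0 z = 0" "degree g0 = d" using Pd unfolding P_def by blast
  define g where "g = primitive_part g0"
  have gnz: "g \<noteq> 0" using g0 by (simp add: g_def)
  have cg: "content g = 1" using g0 by (simp add: g_def)
  have "ip g0 z = of_int (content g0) * ip g z"
    by (metis content_times_primitive_part g_def ip_smult)
  hence gz: "ip g z = 0" using g0 by simp
  have dg: "degree g = d" using g0 by (simp add: g_def)
  have "g dvd F" if F: "ip F z = 0" for F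
  proof -
    define r where "r = pseudo_mod F g"
    obtain a q where aq: "a \<noteq> 0" "smult a F = g * q + r" using pseudo_mod(1)[OF gnz, of F] r_def by blast
    have rdeg: "r = 0 \<or> degree r < degree g" using pseudo_mod(2)[OF gnz, of F] r_def by blast
    have "ip (smult a F) z = ip (g*q + r) z" using aq by simp
    hence "ip r z = 0" using F gz by simp
    hence "r = 0" using rdeg mind dg by fastforce
    thus ?thesis using prim_dvd[OF cg aq(1)] aq(2) by simp
  qed
  thus ?thesis using gnz cg gz by blast
qed

lemma final_coeff:
  fixes g A B :: "int poly" and c l :: int
  assumes eq: "[:c:] = g*A + smult l B" and dg: "degree g \<ge> 1" and lc: "\<not> l dvd lead_coeff g"
    and l: "prime l"
  shows "l dvd c"
proof (cases "\<forall>i. l dvd coeff A i")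
  case True
  have "c = coeff g 0 * coeff A 0 + l * coeff B 0"
    using arg_cong[OF eq, of "\<lambda>p. coeff p 0"] by (simp add: coeff_mult)
  thus ?thesis using True by simp
next
  case False
  define S where "S = {i. \<not> l dvd coeff A i}"
  have Sne: "S \<noteq> {}" using False S_def by auto
  have Sfin: "finite S"
  proof -
    have "S \<subseteq> {..degree A}"
    proof
      fix i assume "i \<in> S"
      hence "coeff A i \<noteq> 0" unfolding S_def by auto
      thus "i \<in> {..degree A}" using le_degree by auto
    qed
    thus ?thesis by (rule finite_subset) simp
  qed
  define j where "j = Max S"
  have jS: "j \<in> S" using Sne Sfin j_def by simp
  have jmax: "l dvd coeff A i" if ij: "i > j" for i
  proof (rule ccontr)
    assume "\<not> l dvd coeff A i"
    hence "i \<in> S" by (simp add: S_def)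
    hence "i \<le> j" unfolding j_def by (rule Max_ge[OF Sfin])
    thus False using ij by simp
  qed
  define d where "d = degree g"
  have cA: "coeff (g*A) (d+j) = (\<Sum>i\<le>d+j. coeff g i * coeff A (d+j-i))" by (simp add: coeff_mult)
  also have "\<dots> = coeff g d * coeff A j + (\<Sum>i\<in>{..d+j}-{d}. coeff g i * coeff A (d+j-i))"
    by (subst sum.remove[of _ d]) auto
  finally have cA2: "coeff (g*A) (d+j) = coeff g d * coeff A j + (\<Sum>i\<in>{..d+j}-{d}. coeff g i * coeff A (d+j-i))" .
  have rest: "l dvd (\<Sum>i\<in>{..d+j}-{d}. coeff g i * coeff A (d+j-i))"
  proof (rule dvd_sum)
    fix i assume i: "i \<in> {..d+j}-{d}"
    show "l dvd coeff g i * coeff A (d+j-i)"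
    proof (cases "i < d")
      case True
      then have "d + j - i > j" by simp
      then show ?thesis using jmax by simp
    next
      case False
      then have "i > d" using i by auto
      then have "coeff g i = 0" unfolding d_def by (simp add: coeff_eq_0)
      then show ?thesis by simp
    qed
  qed
  have dj: "d + j = Suc (d + j - 1)" using dg d_def by simp
  have "coeff [:c:] (d+j) = 0" by (subst dj) simp
  hence "0 = coeff (g*A) (d+j) + l * coeff B (d+j)" using arg_cong[OF eq, of "\<lambda>p. coeff p (d+j)"] by simp
  hence "coeff (g*A) (d+j) = - (l * coeff B (d+j))" by linarith
  hence ldv: "l dvd coeff (g*A) (d+j)" by simp
  have e: "coeff g d * coeff A j = coeff (g*A) (d+j) - (\<Sum>i\<in>{..d+j}-{d}. coeff g i * coeff A (d+j-i))"
    using cA2 by linarith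
  have "l dvd coeff g d * coeff A j" unfolding e by (rule dvd_diff[OF ldv rest])
  hence "l dvd coeff g d \<or> l dvd coeff A j" using l by (simp add: prime_dvd_mult_iff)
  moreover have "\<not> l dvd coeff A j" using jS S_def by simp
  ultimately show ?thesis using lc d_def by simp
qed

definition Id :: "int poly \<Rightarrow> int \<Rightarrow> int poly \<Rightarrow> bool" where
  "Id g l P \<longleftrightarrow> (\<exists>A B. P = g*A + smult l B)"

lemma Id_add: "Id g l P \<Longrightarrow> Id g l Q \<Longrightarrow> Id g l (P + Q)"
proof -
  assume "Id g l P" "Id g l Q"
  then obtain A B A' B' where "P = g*A + smult l B" "Q = g*A' + smult l B'" unfolding Id_def by blast
  hence "P + Q = g*(A+A') + smult l (B+B')" by (simp add: algebra_simps smult_add_right)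
  thus ?thesis unfolding Id_def by blast
qed
lemma Id_diff: "Id g l P \<Longrightarrow> Id g l Q \<Longrightarrow> Id g l (P - Q)"
proof -
  assume "Id g l P" "Id g l Q"
  then obtain A B A' B' where "P = g*A + smult l B" "Q = g*A' + smult l B'" unfolding Id_def by blast
  hence "P - Q = g*(A-A') + smult l (B-B')" by (simp add: algebra_simps smult_diff_right)
  thus ?thesis unfolding Id_def by blast
qed
lemma Id_mult: "Id g l P \<Longrightarrow> Id g l (Q * P)"
proof -
  assume "Id g l P"
  then obtain A B where "P = g*A + smult l B" unfolding Id_def by blast
  hence "Q * P = g*(Q*A) + smult l (Q*B)" by (simp add: algebra_simps)
  thus ?thesis unfolding Id_def by blast
qed
lemma Id_g: "Id g l (g * A)"
  unfolding Id_def by (rule exI[of _ A], rule exI[of _ 0]) simp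
lemma Id_l: "Id g l (smult l B)"
  unfolding Id_def by (rule exI[of _ 0], rule exI[of _ B]) simp
lemma Id_pow: "Id g l (P - Q) \<Longrightarrow> Id g l (P^n - Q^n)"
proof (induction n)
  case 0
  then show ?case using Id_g[of g l 0] by simp
next
  case (Suc n)
  have "P^Suc n - Q^Suc n = P * (P^n - Q^n) + Q^n * (P - Q)" by (simp add: algebra_simps)
  then show ?case using Suc Id_add Id_mult by metis
qed

lemma prime_step:
  fixes z :: complex and N l :: nat and F :: "int poly"
  assumes N: "N > 0" "z^N = 1" and l: "prime l" "\<not> l dvd N" and F: "ip F z = 0"
  shows "ip F (z^l) = 0"
proof -
  define X :: "int poly" where "X = monom 1 N - 1"
  have Xz: "ip X w = w^N - 1" for w by (simp add: X_def poly_monom)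
  have Xnz: "X \<noteq> 0" using Xz[of 0] N by (auto simp: power_0_left)
  have lcX: "lead_coeff X = 1"
  proof -
    have "X = -1 + monom 1 N" by (simp add: X_def)
    moreover have "degree (-1 :: int poly) < degree (monom (1::int) N)" using N by (simp add: degree_monom_eq)
    ultimately have "lead_coeff X = lead_coeff (monom (1::int) N)" by (metis lead_coeff_add_le)
    thus ?thesis by (simp add: degree_monom_eq)
  qed
  have exz: "\<exists>p. p \<noteq> 0 \<and> ip p z = 0" using Xnz Xz[of z] N by auto
  obtain g where g: "g \<noteq> 0" "content g = 1" "ip g z = 0" "\<And>F. ip F z = 0 \<Longrightarrow> g dvd F"
    using minpoly_exists[OF exz] by blast
  have "(z^l)^N = (z^N)^l" by (simp only: power_mult[symmetric] mult.commute)
  hence zlN: "(z^l)^N = 1" using N by simp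
  have exzl: "\<exists>p. p \<noteq> 0 \<and> ip p (z^l) = 0" using Xnz Xz[of "z^l"] zlN by auto
  obtain h where h: "h \<noteq> 0" "content h = 1" "ip h (z^l) = 0" "\<And>F. ip F (z^l) = 0 \<Longrightarrow> h dvd F"
    using minpoly_exists[OF exzl] by blast
  have "g dvd F" using g F by blast
  then obtain t where t: "F = g * t" by blast
  have "ip g (z^l) = 0"
  proof (rule ccontr)
    assume ng: "ip g (z^l) \<noteq> 0"
    have dg: "degree g \<ge> 1"
    proof (rule ccontr)
      assume "\<not> 1 \<le> degree g"
      hence "degree g = 0" by simp
      then obtain c where "g = [:c:]" by (metis degree_eq_zeroE)
      thus False using g(1,3) by (simp add: map_poly_pCons)
    qed
    have "ip X z = 0" by (subst Xz) (simp only: N diff_self)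
    hence "g dvd X" by (rule g(4))
    then obtain u where u: "X = g * u" by (elim dvdE)
    have lcg: "\<not> int l dvd lead_coeff g"
    proof
      assume "int l dvd lead_coeff g"
      hence "int l dvd lead_coeff X" using u by (simp add: lead_coeff_mult)
      thus False using lcX l by (simp add: prime_gt_1_nat)
    qed
    have hz: "ip h z \<noteq> 0"
    proof
      assume "ip h z = 0"
      then obtain t1 where t1: "h = g * t1" using g(4) by blast
      have "ip t1 (z^l) = 0" using h(3) ng t1 by simp
      hence "h dvd t1" using h(4) by blast
      moreover have t1nz: "t1 \<noteq> 0" using t1 h by auto
      ultimately have "degree h \<le> degree t1" by (rule dvd_imp_degree_le)
      moreover have "degree h = degree g + degree t1" using t1 g(1) t1nz by (simp add: degree_mult_eq)
      ultimately show False using dg by simp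
    qed
    have "ip X (z^l) = 0" by (subst Xz) (simp only: zlN diff_self)
    hence "h dvd X" by (rule h(4))
    then obtain v where v: "X = h * v" by (elim dvdE)
    have "ip X z = ip h z * ip v z" using v by simp
    hence "ip h z * ip v z = 0" using Xz[of z] N by simp
    hence "ip v z = 0" using hz by simp
    then obtain w where w: "v = g * w" using g(4) by blast
    have Xe: "X = g * (h * w)" using v w by (simp add: mult_ac)
    define hl where "hl = pcompose h (monom 1 l)"
    have "ip hl z = 0" using h(3) by (simp add: hl_def poly_pcompose poly_monom)
    then obtain s where s: "hl = g * s" using g(4) by blast
    obtain k where k: "h^l = hl + smult (int l) k" using frob_poly[OF l(1)] hl_def by blast
    define Y :: "int poly" where "Y = monom (int N) (N - 1)"
    have "pderiv X = Y" by (simp add: X_def Y_def pderiv_diff pderiv_monom)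
    also have "pderiv X = g * (h * pderiv w + w * pderiv h) + h * (w * pderiv g)"
      unfolding Xe by (simp add: pderiv_mult algebra_simps)
    finally have Ye: "Y = g * (h * pderiv w + w * pderiv h) + h * (w * pderiv g)" by simp
    define D where "D = w * pderiv g"
    have "Id g l (Y - h * D)" using Ye D_def by (simp add: Id_g)
    hence I1: "Id g l (Y^l - (h*D)^l)" by (rule Id_pow)
    have "(h*D)^l = D^l * (g * s) + smult (int l) (D^l * k)"
      using k s by (simp add: power_mult_distrib algebra_simps)
    hence I2: "Id g l ((h*D)^l)" by (simp add: Id_add Id_mult Id_g Id_l)
    have I3: "Id g l (Y^l)" using Id_add[OF I1 I2] by simp
    have I4: "Id g l ((X + 1)^l - 1^l)" using Xe by (intro Id_pow) (simp add: Id_g)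
    have e1: "monom 1 l * Y^l = monom (int N ^ l) (N * l)"
      using N by (simp add: Y_def monom_power mult_monom algebra_simps)
    have e2: "(X + 1)^l = monom 1 (N*l)" by (simp add: X_def monom_power)
    have "[:int N ^ l:] = monom 1 l * Y^l - smult (int N ^ l) ((X + 1)^l - 1^l)"
      using e1 e2 by (simp add: smult_diff_right smult_monom monom_0)
    moreover have "smult (int N ^ l) ((X + 1)^l - 1^l) = [:int N ^ l:] * ((X + 1)^l - 1^l)" by simp
    ultimately have "Id g l [:int N ^ l:]" using I3 I4 by (metis Id_diff Id_mult)
    then obtain A B where AB: "[:int N ^ l:] = g * A + smult (int l) B" unfolding Id_def by blast
    have pl: "prime (int l)" using l(1) by simp
    have "int l dvd int N ^ l" by (rule final_coeff[OF AB dg lcg pl])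
    hence "int l dvd int N" by (rule prime_dvd_power[OF pl])
    hence "l dvd N" by simp
    thus False using l by simp
  qed
  thus ?thesis using t by simp
qed



lemma cyc:
  fixes z :: complex and N a :: nat
  assumes N: "N > 0" "z^N = 1" and F: "ip F z = 0"
  shows "a > 0 \<Longrightarrow> coprime a N \<Longrightarrow> ip F (z^a) = 0"
proof (induction a rule: less_induct)
  case (less a)
  show ?case
  proof (cases "a = 1")
    case True then show ?thesis using F by simp
  next
    case False
    obtain l where l: "prime l" "l dvd a" using prime_factor_nat False by blast
    then obtain b where b: "a = l * b" by (elim dvdE)
    have l1: "l > 1" using l prime_gt_1_nat by blast
    have b0: "b > 0" using less.prems b by (cases b) auto
    have ba: "b < a" using b l1 b0 by simp
    have cb: "coprime b N" using less.prems b by simp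
    have cl: "coprime l N" using less.prems b by simp
    have nl: "\<not> l dvd N"
    proof
      assume "l dvd N"
      hence "l dvd gcd l N" by simp
      thus False using cl l by (simp add: prime_gt_1_nat)
    qed
    have Fb: "ip F (z^b) = 0" using less.IH[OF ba b0 cb] .
    have "(z^b)^N = (z^N)^b" by (simp only: power_mult[symmetric] mult.commute)
    hence zbN: "(z^b)^N = 1" using N by simp
    have "ip F ((z^b)^l) = 0" by (rule prime_step[OF N(1) zbN l(1) nl Fb])
    moreover have "(z^b)^l = z^a" using b by (simp only: power_mult[symmetric] mult.commute)
    ultimately show ?thesis by simp
  qed
qed

definition Qi :: "nat \<Rightarrow> int poly" where
  "Qi n = monom 1 (n+3) - monom 1 (n+2) - monom 1 (n+1) - monom 1 n + monom 1 3 + monom 1 2 + monom 1 1 - 1"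

lemma ip_Qi: "ip (Qi n) w = w^(n+3) - w^(n+2) - w^(n+1) - w^n + w^3 + w^2 + w - 1"
  by (simp add: Qi_def poly_monom)

lemma core:
  fixes z :: complex and N n d M :: nat and G :: "nat set"
  assumes zN: "z^N = 1" and prim: "\<And>t. z^t = 1 \<Longrightarrow> N dvd t" and NdM: "N = d*M"
    and M: "M > 0" and d: "d > 0" and dn: "d dvd n"
    and Q: "ip (Qi n) z = 0"
    and G: "G \<subseteq> {..<d}" "\<And>j. j \<in> G \<Longrightarrow> coprime (1 + j*M) N"
  shows "card G \<le> 3"
proof -
  have N0: "N > 0" using NdM M d by simp
  have z0: "z \<noteq> 0" using zN N0 by (auto simp: power_0_left)
  define X where "X = z^n"
  define C :: "complex poly" where "C = [: -(X+1), 1-X, 1-X, X+1 :]"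
  have Cnz: "C \<noteq> 0"
  proof
    assume "C = 0"
    hence "coeff C 0 = 0" "coeff C 1 = 0" by simp_all
    hence "X = -1" "X = 1" by (simp_all add: C_def add_eq_0_iff)
    thus False by simp
  qed
  have rootC: "poly C w = 0" if "ip (Qi n) w = 0" "w^n = X" for w
  proof -
    have "ip (Qi n) w = X*w^3 - X*w^2 - X*w - X + w^3 + w^2 + w - 1"
      unfolding ip_Qi using that(2) by (simp add: power_add power2_eq_square)
    moreover have "poly C w = X*w^3 - X*w^2 - X*w - X + w^3 + w^2 + w - 1"
      by (simp add: C_def algebra_simps power2_eq_square power3_eq_cube)
    ultimately show ?thesis using that(1) by simp
  qed
  define w where "w = (\<lambda>j::nat. z^(1 + j*M))"
  obtain e where e: "n = d * e" using dn by (elim dvdE)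
  have wroot: "poly C (w j) = 0" if j: "j \<in> G" for j
  proof (rule rootC)
    show "ip (Qi n) (w j) = 0" unfolding w_def
      by (rule cyc[OF N0 zN Q]) (use G(2)[OF j] in auto)
    have "(w j)^n = z^n * z^(N * (j*e))"
      by (simp add: w_def NdM e power_add[symmetric] power_mult[symmetric] algebra_simps)
    also have "z^(N * (j*e)) = 1" by (simp add: power_mult zN)
    finally show "(w j)^n = X" by (simp add: X_def)
  qed
  have inj: "inj_on w G"
  proof (rule inj_onI)
    fix a b assume a: "a \<in> G" and b: "b \<in> G" and eq: "w a = w b"
    show "a = b"
    proof (rule ccontr)
      assume "a \<noteq> b"
      then consider "a < b" | "b < a" by linarith
      then show False
      proof cases
        case 1
        have "z^(1 + b*M) = z^(1 + a*M) * z^((b-a)*M)"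
          using 1 by (simp add: power_add[symmetric] algebra_simps)
        hence "z^((b-a)*M) = 1" using eq z0 by (simp add: w_def)
        hence "d*M dvd (b-a)*M" using prim NdM by metis
        hence "d dvd b - a" using M by simp
        moreover have "b - a < d" "b - a > 0" using G(1) b 1 by auto
        ultimately show False by (simp add: nat_dvd_not_less)
      next
        case 2
        have "z^(1 + a*M) = z^(1 + b*M) * z^((a-b)*M)"
          using 2 by (simp add: power_add[symmetric] algebra_simps)
        hence "z^((a-b)*M) = 1" using eq z0 by (simp add: w_def)
        hence "d*M dvd (a-b)*M" using prim NdM by metis
        hence "d dvd a - b" using M by simp
        moreover have "a - b < d" "a - b > 0" using G(1) a 2 by auto
        ultimately show False by (simp add: nat_dvd_not_less)
      qed
    qed
  qed
  have "card G = card (w ` G)" using inj by (simp add: card_image)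
  also have "\<dots> \<le> card {x. poly C x = 0}"
    using wroot poly_roots_finite[OF Cnz] by (intro card_mono) auto
  also have "\<dots> \<le> degree C" using card_poly_roots_bound[OF Cnz] .
  also have "\<dots> \<le> 3" by (simp add: C_def)
  finally show ?thesis .
qed



lemma cop1: "coprime (1 + j*M) (M::nat)"
proof (rule coprimeI)
  fix c assume h1: "c dvd 1 + j*M" and h2: "c dvd M"
  have "c dvd j*M" using h2 by simp
  hence "c dvd 1" using h1 by (metis dvd_add_left_iff)
  thus "is_unit c" by simp
qed

lemma count_p:
  fixes p M :: nat assumes p: "prime p" "p \<ge> 5"
  shows "card {j \<in> {..<5::nat}. \<not> p dvd 1 + j*M} \<ge> 4"
proof -
  define B where "B = {j \<in> {..<5::nat}. p dvd 1 + j*M}"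
  have eq: "{j \<in> {..<5::nat}. \<not> p dvd 1 + j*M} = {..<5} - B" by (auto simp: B_def)
  have Bsub: "B \<subseteq> {..<5}" by (auto simp: B_def)
  have Bfin: "finite B" using Bsub finite_subset by blast
  have uniq: "a = b" if a: "a \<in> B" and b: "b \<in> B" and ab: "a < b" for a b
  proof -
    have pb: "p dvd 1 + b*M" and pa: "p dvd 1 + a*M" using a b by (simp_all add: B_def)
    have "p dvd (1 + b*M) - (1 + a*M)" by (rule dvd_diff_nat[OF pb pa])
    also have "(1 + b*M) - (1 + a*M) = (b - a) * M" by (simp add: diff_mult_distrib)
    finally have "p dvd (b-a) \<or> p dvd M" using p by (simp add: prime_dvd_mult_iff)
    thus ?thesis
    proof
      assume "p dvd b - a"
      moreover have "b - a < p" "b - a > 0" using b ab p by (auto simp: B_def)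
      ultimately show ?thesis by (simp add: nat_dvd_not_less)
    next
      assume "p dvd M"
      hence "p dvd a*M" by simp
      moreover have "p dvd 1 + a*M" using a by (simp add: B_def)
      ultimately have "p dvd 1" by (metis dvd_add_left_iff)
      thus ?thesis using p by simp
    qed
  qed
  have all: "\<forall>a\<in>B. \<forall>b\<in>B. a = b"
  proof (intro ballI)
    fix a b assume "a \<in> B" "b \<in> B"
    thus "a = b" using uniq by (metis linorder_neqE_nat)
  qed
  have "card B \<le> Suc 0" using card_le_Suc0_iff_eq[OF Bfin] all by blast
  hence "card B \<le> 1" by simp
  hence "card ({..<5::nat} - B) \<ge> 4" using card_Diff_subset[OF Bfin Bsub] by simp
  thus ?thesis using eq by simp
qed

lemma count_9:
  fixes M :: nat
  shows "card {j \<in> {..<6::nat}. \<not> 3 dvd 1 + j*M} \<ge> 4"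
proof -
  define S where "S = {j \<in> {..<6::nat}. \<not> 3 dvd 1 + j*M}"
  have "M mod 3 = 0 \<or> M mod 3 = 1 \<or> M mod 3 = 2" by auto
  then obtain T :: "nat set" where T: "T \<subseteq> S" "card T = 4"
  proof (elim disjE)
    assume h: "M mod 3 = 0"
    have "{0,1,2,3} \<subseteq> S" unfolding S_def using h by auto presburger+
    thus ?thesis using that[of "{0,1,2,3}"] by simp
  next
    assume h: "M mod 3 = 1"
    have "{0,1,3,4} \<subseteq> S" unfolding S_def using h by auto presburger+
    thus ?thesis using that[of "{0,1,3,4}"] by simp
  next
    assume h: "M mod 3 = 2"
    have "{0,2,3,5} \<subseteq> S" unfolding S_def using h by auto presburger+
    thus ?thesis using that[of "{0,2,3,5}"] by simp
  qed
  have "finite S" by (simp add: S_def)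
  hence "card T \<le> card S" using T(1) by (rule card_mono)
  thus ?thesis using T(2) S_def by simp
qed



theorem mainTheorem7:
  fixes k :: nat and m N :: int
  assumes "k \<ge> 1" and "N \<ge> 3" and "m \<ge> 1" and "gcd m N = 1"
    and "Qpoly k (exp (2 * of_real pi * \<i> * of_int m / of_int N)) = 0"
  shows "gcd N (4 * int k + 1) \<in> {1, 3}
         \<and> (k mod 3 \<noteq> 2 \<longrightarrow> gcd N (4 * int k + 1) = 1)"
proof -
  obtain N' where N': "N = int N'" using assms(2) zero_le_imp_eq_int by (metis dual_order.trans zero_le_numeral)
  have N'3: "N' \<ge> 3" using assms(2) N' by simp
  define n where "n = 4*k+1"
  define w0 where "w0 = 2 * of_real pi * \<i> * of_int m / (of_int N :: complex)"
  define z where "z = exp w0"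
  have zpow: "z^t = exp (of_nat t * w0)" for t :: nat
    by (simp add: z_def exp_of_nat_mult)
  have tw: "of_nat t * w0 = \<i> * complex_of_real (2 * pi * m * t / N)" for t :: nat
    by (simp add: w0_def field_simps)
  have prim: "N' dvd t" if zt: "z^t = 1" for t :: nat
  proof -
    have "exp (\<i> * complex_of_real (2 * pi * m * t / N)) = 1" using zt zpow tw by simp
    then obtain j :: int where j: "2 * pi * m * t / N = of_int (2*j) * pi"
      by (auto simp: exp_eq_1)
    have "real_of_int (m * int t) = real_of_int (j * N)"
      using j assms(2) by (simp add: field_simps)
    hence "m * int t = j * N" by (simp only: of_int_eq_iff)
    hence "N dvd m * int t" by (metis dvd_triv_right)
    moreover have "coprime N m" using assms(4) by (simp add: coprime_iff_gcd_eq_1 gcd.commute)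
    ultimately have "N dvd int t" by (simp add: coprime_dvd_mult_right_iff)
    thus ?thesis using N' by simp
  qed
  have zN: "z^N' = 1"
  proof -
    have "z^N' = exp (\<i> * complex_of_real (2 * pi * m * N' / N))" using zpow tw by simp
    also have "2 * pi * m * N' / N = of_int (2*m) * pi" using N' assms(2) by simp
    also have "exp (\<i> * complex_of_real (of_int (2*m) * pi)) = 1"
      by (subst exp_eq_1) auto
    finally show ?thesis .
  qed
  have Q: "ip (Qi n) z = 0"
  proof -
    have "Qpoly k z = 0" using assms(5) by (simp add: z_def w0_def)
    moreover have "ip (Qi n) z = Qpoly k z"
    proof -
      have e: "4*k+1+3 = 4*k+4" "4*k+1+2 = 4*k+3" "4*k+1+1 = 4*k+2" by simp_all
      show ?thesis unfolding ip_Qi Qpoly_def n_def e by (rule refl)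
    qed
    ultimately show ?thesis by simp
  qed
  define G0 where "G0 = gcd N' n"
  have G0pos: "G0 > 0" using N'3 by (simp add: G0_def)
  have three: "p = 3" if p: "prime p" "p dvd G0" for p
  proof (rule ccontr)
    assume p3: "p \<noteq> 3"
    have pN: "p dvd N'" and pn: "p dvd n" using p by (simp_all add: G0_def)
    have p2: "p \<noteq> 2"
    proof
      assume "p = 2"
      hence "2 dvd 4*k+1" using pn n_def by simp
      thus False by presburger
    qed
    have p5: "p \<ge> 5"
    proof -
      have "p \<ge> 2" using prime_ge_2_nat[OF p(1)] .
      moreover have "p \<noteq> 4"
      proof
        assume p4: "p = 4"
        hence "(2::nat) dvd p" by simp
        hence "2 = p" using p(1) by (intro primes_dvd_imp_eq) simp_all
        thus False using p2 by simp
      qed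
      ultimately show ?thesis using p2 p3 by linarith
    qed
    obtain M where NM: "N' = p * M" using pN by (elim dvdE)
    have M0: "M > 0" using NM N'3 by (cases M) auto
    define G where "G = {j \<in> {..<5::nat}. \<not> p dvd 1 + j*M}"
    have Gsub: "G \<subseteq> {..<p}" using p5 by (auto simp: G_def)
    have Gcop: "coprime (1 + j*M) N'" if j: "j \<in> G" for j
    proof -
      have "coprime p (1 + j*M)" using j p(1) by (intro prime_imp_coprime) (auto simp: G_def)
      hence "coprime (1 + j*M) p" by (simp add: coprime_commute)
      moreover have "coprime (1 + j*M) M" by (rule cop1)
      ultimately show ?thesis using NM by simp
    qed
    have "card G \<le> 3"
      by (rule core[OF zN prim NM M0 _ pn Q Gsub Gcop]) (use p5 in auto)
    moreover have "card G \<ge> 4" unfolding G_def by (rule count_p[OF p(1) p5])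
    ultimately show False by simp
  qed
  have nine: "\<not> 9 dvd G0"
  proof
    assume h: "9 dvd G0"
    have pN: "9 dvd N'" and pn: "9 dvd n" using h by (simp_all add: G0_def)
    obtain M where NM: "N' = 9 * M" using pN by (elim dvdE)
    have M0: "M > 0" using NM N'3 by (cases M) auto
    define G where "G = {j \<in> {..<6::nat}. \<not> 3 dvd 1 + j*M}"
    have Gsub: "G \<subseteq> {..<9}" by (auto simp: G_def)
    have Gcop: "coprime (1 + j*M) N'" if j: "j \<in> G" for j
    proof -
      have "coprime 3 (1 + j*M)" using j by (intro prime_imp_coprime) (auto simp: G_def)
      hence c3: "coprime (1 + j*M) 3" by (simp add: coprime_commute)
      have "coprime (1 + j*M) (3^2)" using coprime_power_right_iff[of "1 + j*M" 3 2] c3 by blast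
      moreover have "(3::nat)^2 = 9" by simp
      ultimately have "coprime (1 + j*M) 9" by metis
      moreover have "coprime (1 + j*M) M" by (rule cop1)
      ultimately show ?thesis using NM by simp
    qed
    have "card G \<le> 3"
      by (rule core[OF zN prim NM M0 _ pn Q Gsub Gcop]) auto
    moreover have "card G \<ge> 4" unfolding G_def by (rule count_9)
    ultimately show False by simp
  qed
  have G013: "G0 = 1 \<or> G0 = 3"
  proof (cases "G0 = 1")
    case False
    obtain p where p: "prime p" "p dvd G0" using prime_factor_nat[OF False] by blast
    have "p = 3" using three p by blast
    hence "3 dvd G0" using p by simp
    then obtain r where r: "G0 = 3 * r" by (elim dvdE)
    show ?thesis
    proof (cases "r = 1")
      case True then show ?thesis using r by simp
    next
      case False
      obtain q where q: "prime q" "q dvd r" using prime_factor_nat[OF False] by blast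
      have "q dvd G0" using q r by simp
      hence "q = 3" using three q by blast
      hence "3 dvd r" using q by simp
      then obtain s where "r = 3 * s" by (elim dvdE)
      hence "G0 = 9 * s" using r by simp
      hence "9 dvd G0" by simp
      thus ?thesis using nine by simp
    qed
  qed simp
  have gcdeq: "gcd N (4 * int k + 1) = int G0"
  proof -
    have "4 * int k + 1 = int n" by (simp add: n_def)
    thus ?thesis by (simp add: N' G0_def)
  qed
  have part2: "G0 = 1" if km: "k mod 3 \<noteq> 2"
  proof (rule ccontr)
    assume "G0 \<noteq> 1"
    hence "G0 = 3" using G013 by simp
    moreover have "G0 dvd n" by (simp add: G0_def)
    ultimately have "3 dvd n" by simp
    hence "3 dvd 4*k+1" by (simp add: n_def)
    thus False using km by presburger
  qed
  have "gcd N (4 * int k + 1) \<in> {1, 3}" using G013 gcdeq by auto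
  moreover have "k mod 3 \<noteq> 2 \<longrightarrow> gcd N (4 * int k + 1) = 1" using part2 gcdeq by simp
  ultimately show ?thesis by blast
qed


end
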